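(* Let $\mathbb{F}$ be a field with $\mathrm{char}(\mathbb{F})\neq 2$, and let $L$ be a finite-dimensional pure, nonnilpotent, solvable Lie algebra over $\mathbb{F}$ of breadth $1$. Then $L$ has a basis $\{x,y\}$ such that $[x,y]=x$.
   Context: For $x\in L$, $b(x)=\mathrm{rank}(\mathrm{ad}_x)$ and $b(L)=\max\{b(x)\mid x\in L\}$ is the breadth of $L$. $L$ is pure if it has no abelian ideal as a direct summand; equivalently $Z(L)\subseteq[L,L]$, where $Z(L)$ is the center. *)

theory Defs
  imports Main "HOL.Vector_Spaces"
begin

definition lie_algebra :: "('k::field \<Rightarrow> 'v::ab_group_add \<Rightarrow> 'v) \<Rightarrow> ('v \<Rightarrow> 'v \<Rightarrow> 'v) \<Rightarrow> bool" where
  "lie_algebra sc br \<longleftrightarrow>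
     vector_space sc \<and>
     (\<forall>y. Vector_Spaces.linear sc sc (\<lambda>x. br x y)) \<and>
     (\<forall>x. Vector_Spaces.linear sc sc (\<lambda>y. br x y)) \<and>
     (\<forall>x. br x x = 0) \<and>
     (\<forall>x y z. br x (br y z) + br y (br z x) + br z (br x y) = 0)"

definition finite_dim :: "('k::field \<Rightarrow> 'v::ab_group_add \<Rightarrow> 'v) \<Rightarrow> bool" where
  "finite_dim sc \<longleftrightarrow> (\<exists>B. finite B \<and> module.span sc B = UNIV)"

definition bracket_span :: "('k::field \<Rightarrow> 'v::ab_group_add \<Rightarrow> 'v) \<Rightarrow> ('v \<Rightarrow> 'v \<Rightarrow> 'v) \<Rightarrow> 'v set \<Rightarrow> 'v set \<Rightarrow> 'v set" where
  "bracket_span sc br A B = module.span sc {br a b | a b. a \<in> A \<and> b \<in> B}"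

fun derived_series :: "('k::field \<Rightarrow> 'v::ab_group_add \<Rightarrow> 'v) \<Rightarrow> ('v \<Rightarrow> 'v \<Rightarrow> 'v) \<Rightarrow> nat \<Rightarrow> 'v set" where
  "derived_series sc br 0 = UNIV"
| "derived_series sc br (Suc k) = bracket_span sc br (derived_series sc br k) (derived_series sc br k)"

fun lower_central_series :: "('k::field \<Rightarrow> 'v::ab_group_add \<Rightarrow> 'v) \<Rightarrow> ('v \<Rightarrow> 'v \<Rightarrow> 'v) \<Rightarrow> nat \<Rightarrow> 'v set" where
  "lower_central_series sc br 0 = UNIV"
| "lower_central_series sc br (Suc k) = bracket_span sc br UNIV (lower_central_series sc br k)"

definition solvable_lie :: "('k::field \<Rightarrow> 'v::ab_group_add \<Rightarrow> 'v) \<Rightarrow> ('v \<Rightarrow> 'v \<Rightarrow> 'v) \<Rightarrow> bool" where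
  "solvable_lie sc br \<longleftrightarrow> (\<exists>k. derived_series sc br k = {0})"

definition nilpotent_lie :: "('k::field \<Rightarrow> 'v::ab_group_add \<Rightarrow> 'v) \<Rightarrow> ('v \<Rightarrow> 'v \<Rightarrow> 'v) \<Rightarrow> bool" where
  "nilpotent_lie sc br \<longleftrightarrow> (\<exists>k. lower_central_series sc br k = {0})"

definition lie_ideal :: "('k::field \<Rightarrow> 'v::ab_group_add \<Rightarrow> 'v) \<Rightarrow> ('v \<Rightarrow> 'v \<Rightarrow> 'v) \<Rightarrow> 'v set \<Rightarrow> bool" where
  "lie_ideal sc br I \<longleftrightarrow> module.subspace sc I \<and> (\<forall>x i. i \<in> I \<longrightarrow> br x i \<in> I)"

definition pure_lie :: "('k::field \<Rightarrow> 'v::ab_group_add \<Rightarrow> 'v) \<Rightarrow> ('v \<Rightarrow> 'v \<Rightarrow> 'v) \<Rightarrow> bool" where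
  "pure_lie sc br \<longleftrightarrow>
     \<not> (\<exists>I J. lie_ideal sc br I \<and> lie_ideal sc br J \<and> I \<noteq> {0} \<and>
              (\<forall>a\<in>I. \<forall>b\<in>I. br a b = 0) \<and>
              I \<inter> J = {0} \<and> (\<forall>v. \<exists>a\<in>I. \<exists>b\<in>J. v = a + b))"

definition breadth_elt :: "('k::field \<Rightarrow> 'v::ab_group_add \<Rightarrow> 'v) \<Rightarrow> ('v \<Rightarrow> 'v \<Rightarrow> 'v) \<Rightarrow> 'v \<Rightarrow> nat" where
  "breadth_elt sc br x = vector_space.dim sc (range (br x))"

definition breadth :: "('k::field \<Rightarrow> 'v::ab_group_add \<Rightarrow> 'v) \<Rightarrow> ('v \<Rightarrow> 'v \<Rightarrow> 'v) \<Rightarrow> nat" where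
  "breadth sc br = Max (range (breadth_elt sc br))"

end

theory Submission
  imports Defs
begin

context
  fixes sc :: "'k::field \<Rightarrow> 'v::ab_group_add \<Rightarrow> 'v"
    and br :: "'v \<Rightarrow> 'v \<Rightarrow> 'v"
  assumes lie: "lie_algebra sc br"
begin

interpretation V: vector_space sc using lie unfolding lie_algebra_def by blast

lemma add1: "br (x + y) z = br x z + br y z"
  using lie unfolding lie_algebra_def linear_iff by blast
lemma add2: "br z (x + y) = br z x + br z y"
  using lie unfolding lie_algebra_def linear_iff by blast
lemma sc1: "br (sc c x) z = sc c (br x z)"
  using lie unfolding lie_algebra_def linear_iff by blast
lemma sc2: "br z (sc c x) = sc c (br z x)"
  using lie unfolding lie_algebra_def linear_iff by blast
lemma alt: "br x x = 0"
  using lie unfolding lie_algebra_def by blast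
lemma jac: "br x (br y z) + br y (br z x) + br z (br x y) = 0"
  using lie unfolding lie_algebra_def by blast

lemma zero1: "br 0 z = 0"
  using add1[of 0 0 z] by simp
lemma zero2: "br z 0 = 0"
  using add2[of z 0 0] by simp
lemma neg1: "br (- x) z = - br x z"
  using add1[of x "-x" z] zero1 by (simp add: eq_neg_iff_add_eq_0 add.commute)
lemma neg2: "br z (- x) = - br z x"
  using add2[of z x "-x"] zero2 by (simp add: eq_neg_iff_add_eq_0 add.commute)
lemma diff1: "br (x - y) z = br x z - br y z"
  using add1[of x "-y" z] neg1 by simp
lemma diff2: "br z (x - y) = br z x - br z y"
  using add2[of z x "-y"] neg2 by simp
lemma anti: "br x y = - br y x"
proof -
  have "br (x+y) (x+y) = br x x + br x y + (br y x + br y y)" by (simp only: add1 add2 ac_simps)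
  then have "br (x+y) (x+y) = br x y + br y x" by (simp add: alt)
  then have "br x y + br y x = 0" using alt[of "x+y"] by simp
  then show ?thesis by (simp add: eq_neg_iff_add_eq_0)
qed

lemma breadth_le:
  assumes fin: "finite_dim sc" and b1: "breadth sc br = 1"
  shows "breadth_elt sc br x \<le> 1"
proof -
  obtain B0 where B0: "finite B0" "V.span B0 = UNIV" using fin unfolding finite_dim_def by blast
  have "range (breadth_elt sc br) \<subseteq> {..card B0}"
    using V.dim_le_card[of _ B0] B0 unfolding breadth_elt_def by auto
  then have "finite (range (breadth_elt sc br))" using finite_subset by blast
  then show ?thesis using b1 unfolding breadth_def by (metis Max_ge rangeI)
qed

lemma R1:
  assumes fin: "finite_dim sc" and b1: "breadth sc br = 1"
    and nz: "br x y \<noteq> 0"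
  shows "\<exists>c. br x z = sc c (br x y)"
proof (rule ccontr)
  assume nc: "\<not> (\<exists>c. br x z = sc c (br x y))"
  obtain B0 where B0: "finite B0" "V.span B0 = UNIV" using fin unfolding finite_dim_def by blast
  have ne: "br x z \<noteq> br x y" using nc V.scale_one by metis
  have ind: "V.independent {br x z, br x y}"
    using ne nz nc by (auto simp: V.independent_insert V.span_singleton)
  obtain B where B: "B \<subseteq> range (br x)" "V.independent B" "range (br x) \<subseteq> V.span B"
    "card B = V.dim (range (br x))"
    using V.basis_exists by blast
  have fB: "finite B" using V.independent_span_bound[of B0 B] B0 B by auto
  have "card {br x z, br x y} \<le> card B"
    using V.independent_span_bound[of B "{br x z, br x y}"] fB ind B by auto
  then have "2 \<le> breadth_elt sc br x" using ne B unfolding breadth_elt_def by simp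
  then show False using breadth_le[OF fin b1, of x] by simp
qed

lemma caseB:
  assumes fin: "finite_dim sc" and b1: "breadth sc br = 1"
    and e2: "\<And>x y. br x (br x y) = 0"
  shows "nilpotent_lie sc br"
proof -
  have pol: "br x (br y z) = - br y (br x z)" for x y z
  proof -
    have "br (x+y) (br (x+y) z) = br x (br x z) + br x (br y z) + (br y (br x z) + br y (br y z))"
      by (simp only: add1 add2 ac_simps)
    then have "br x (br y z) + br y (br x z) = 0" using e2 by simp
    then show ?thesis by (simp add: eq_neg_iff_add_eq_0)
  qed
  have cyc: "br x (br y z) = br y (br z x)" for x y z
    using pol[of x y z] anti[of x z] neg2 by simp
  have three: "br x (br y z) = 0" for x y z
  proof (rule ccontr)
    let ?w = "br x (br y z)"
    assume w: "?w \<noteq> 0"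
    then have "br y (br z x) \<noteq> 0" using cyc[of x y z] by simp
    then obtain c where c: "br y z = sc c (br y (br z x))"
      using R1[OF fin b1, of y "br z x" z] by blast
    then have "br y z = sc c ?w" using cyc[of x y z] by simp
    then have "br x (br y z) = br x (sc c ?w)" by (rule arg_cong)
    then have "?w = sc c (br x ?w)" by (simp only: sc2)
    also have "br x ?w = 0" using e2 by simp
    finally show False using w by simp
  qed
  have inner: "br a b = 0" if "b \<in> V.span S" "\<forall>s\<in>S. br a s = 0" for a b S
  proof -
    have "V.subspace {b. br a b = 0}"
      by (rule V.subspaceI) (auto simp: zero2 add2 sc2)
    then have "V.span S \<subseteq> {b. br a b = 0}" using that(2) by (intro V.span_minimal) auto
    then show ?thesis using that(1) by auto
  qed
  have "lower_central_series sc br 2 = {0}"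
  proof -
    let ?S = "{br a b |a b. a \<in> UNIV \<and> b \<in> bracket_span sc br UNIV UNIV}"
    have "?S \<subseteq> {0}"
    proof
      fix v assume "v \<in> ?S"
      then obtain a b where v: "v = br a b" and b: "b \<in> V.span {br c d |c d. c \<in> UNIV \<and> d \<in> UNIV}"
        unfolding bracket_span_def by blast
      have "\<forall>s\<in>{br c d |c d. c \<in> UNIV \<and> d \<in> UNIV}. br a s = 0" using three by blast
      then have "br a b = 0" using inner[OF b] by blast
      then show "v \<in> {0}" using v by simp
    qed
    then have "V.span ?S \<subseteq> V.span {0}" by (rule V.span_mono)
    also have "V.span {0} = {0}" using V.span_insert_0[of "{}"] V.span_empty by simp
    finally have sub: "V.span ?S \<subseteq> {0}" .
    have "lower_central_series sc br 2 = V.span ?S"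
      by (simp add: numeral_2_eq_2 bracket_span_def)
    then show ?thesis using sub V.span_zero by blast
  qed
  then show ?thesis unfolding nilpotent_lie_def by blast
qed

lemma caseA:
  assumes fin: "finite_dim sc" and b1: "breadth sc br = 1" and pure: "pure_lie sc br"
    and nz: "br x0 y0 \<noteq> 0" and nz2: "br x0 (br x0 y0) \<noteq> 0"
  shows "\<exists>x y. x \<noteq> y \<and> \<not> module.dependent sc {x, y} \<and> module.span sc {x, y} = UNIV
               \<and> br x y = x"
proof -
  define a where "a = br x0 y0"
  obtain l where l: "br x0 a = sc l a" using R1[OF fin b1 nz, of a] unfolding a_def by blast
  have l0: "l \<noteq> 0" using l nz2 unfolding a_def by auto
  define x where "x = sc (inverse l) x0"
  have hxa: "br x a = a" unfolding x_def using l l0 by (simp add: sc1)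
  have ha: "a \<noteq> 0" using nz a_def by simp
  have hax: "br a x = - a" using hxa anti[of a x] by simp
  have hx0: "x \<noteq> 0" using hxa ha zero1 by auto
  have Rx: "\<exists>c. br x v = sc c a" for v using R1[OF fin b1, of x a v] hxa ha by simp
  have Ra: "\<exists>e. br a v = - sc e a" for v using R1[OF fin b1, of a x v] hax ha by simp
  define K where "K = {z. br x z = 0 \<and> br a z = 0}"
  have decomp: "\<exists>c e. v - sc c a - sc e x \<in> K" for v
  proof -
    obtain c where c: "br x v = sc c a" using Rx by blast
    obtain e where e: "br a v = - sc e a" using Ra by blast
    have "br x (v - sc c a - sc e x) = 0" using c hxa by (simp add: diff2 sc2 alt)
    moreover have "br a (v - sc c a - sc e x) = 0" using e hax by (simp add: diff2 sc2 alt)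
    ultimately show ?thesis unfolding K_def by blast
  qed
  have abel: "br k1 k2 = 0" if k1: "k1 \<in> K" and k2: "k2 \<in> K" for k1 k2
  proof -
    have "br (x + k1) a = a" using hxa k1 anti[of k1 a] unfolding K_def by (simp add: add1)
    then obtain c where c: "br (x + k1) k2 = sc c a" using R1[OF fin b1, of "x+k1" a k2] ha by auto
    have eq: "br k1 k2 = sc c a" using c k2 unfolding K_def by (simp add: add1)
    have "br x (br k1 k2) = 0"
      using jac[of x k1 k2] k1 k2 anti[of k2 x] unfolding K_def by (simp add: zero2)
    then have "sc c a = 0" using eq hxa by (simp add: sc2)
    then show ?thesis using eq by simp
  qed
  have cent: "br v k = 0" if k: "k \<in> K" for v k
  proof -
    obtain c e where ce: "v - sc c a - sc e x \<in> K" using decomp by blast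
    have "br v k = br ((v - sc c a - sc e x) + sc c a + sc e x) k" by simp
    also have "\<dots> = br (v - sc c a - sc e x) k + sc c (br a k) + sc e (br x k)"
      by (simp only: add1 sc1)
    finally have "br v k = br (v - sc c a - sc e x) k + sc c (br a k) + sc e (br x k)" .
    then show ?thesis using abel[OF ce k] k unfolding K_def by simp
  qed
  define J where "J = V.span {x, a}"
  have Jrep: "\<exists>s t. z = sc s x + sc t a" if zJ: "z \<in> J" for z
  proof -
    obtain s where "z - sc s x \<in> V.span {a}" using zJ V.span_breakdown_eq[of z x "{a}"] unfolding J_def by blast
    then obtain t where "z - sc s x = sc t a" unfolding V.span_singleton by blast
    then have "z = sc s x + sc t a" by (metis add.commute diff_add_cancel)
    then show ?thesis by blast
  qed
  have xJ: "x \<in> J" and aJ: "a \<in> J" unfolding J_def by (auto intro: V.span_base)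
  have KI: "lie_ideal sc br K"
    unfolding lie_ideal_def
  proof
    show "V.subspace K"
    proof (rule V.subspaceI)
      show "0 \<in> K" unfolding K_def by (simp add: zero2)
      show "y + z \<in> K" if "y \<in> K" "z \<in> K" for y z
        using that unfolding K_def by (simp add: add2)
      show "sc c y \<in> K" if "y \<in> K" for c y
        using that unfolding K_def by (simp add: sc2)
    qed
    show "\<forall>v i. i \<in> K \<longrightarrow> br v i \<in> K"
    proof (intro allI impI)
      fix v i assume "i \<in> K"
      then have "br v i = 0" by (rule cent)
      then show "br v i \<in> K" unfolding K_def by (simp add: zero2)
    qed
  qed
  have JI: "lie_ideal sc br J"
    unfolding lie_ideal_def
  proof
    show "V.subspace J" unfolding J_def by simp
    show "\<forall>v i. i \<in> J \<longrightarrow> br v i \<in> J"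
    proof (intro allI impI)
      fix v j assume "j \<in> J"
      then obtain s t where j: "j = sc s x + sc t a" using Jrep by blast
      obtain c where c: "br x v = sc c a" using Rx by blast
      obtain e where e: "br a v = - sc e a" using Ra by blast
      have "br v j = sc s (br v x) + sc t (br v a)" using j by (simp add: add2 sc2)
      also have "\<dots> = sc s (- sc c a) + sc t (sc e a)"
        using c e anti[of v x] anti[of v a] by simp
      also have "\<dots> \<in> J" unfolding J_def
        by (intro V.span_add V.span_scale V.span_neg V.span_base) auto
      finally show "br v j \<in> J" .
    qed
  qed
  have KJ: "K \<inter> J = {0}"
  proof
    show "{0} \<subseteq> K \<inter> J" using xJ V.span_zero unfolding K_def J_def by (auto simp: zero2)
    show "K \<inter> J \<subseteq> {0}"
    proof
      fix z assume z: "z \<in> K \<inter> J"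
      then obtain s t where st: "z = sc s x + sc t a" using Jrep by blast
      have "br x z = sc t a" using st hxa by (simp add: add2 sc2 alt)
      then have t: "t = 0" using z ha unfolding K_def by simp
      have "br a z = - sc s a" using st hax by (simp add: add2 sc2 alt)
      then have s: "s = 0" using z ha unfolding K_def by simp
      show "z \<in> {0}" using st s t by simp
    qed
  qed
  have sum: "\<forall>v. \<exists>k\<in>K. \<exists>j\<in>J. v = k + j"
  proof
    fix v
    obtain c e where ce: "v - sc c a - sc e x \<in> K" using decomp by blast
    have "sc c a + sc e x \<in> J" unfolding J_def by (intro V.span_add V.span_scale V.span_base) auto
    moreover have "v = (v - sc c a - sc e x) + (sc c a + sc e x)" by simp
    ultimately show "\<exists>k\<in>K. \<exists>j\<in>J. v = k + j" using ce by blast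
  qed
  have K0: "K = {0}"
  proof (rule ccontr)
    assume "K \<noteq> {0}"
    then show False using pure KI JI KJ sum abel unfolding pure_lie_def by blast
  qed
  have all: "\<exists>c e. v = sc c a + sc e x" for v
  proof -
    obtain c e where ce: "v - sc c a - sc e x \<in> K" using decomp by blast
    then have "v - sc c a - sc e x = 0" using K0 by simp
    then have "v = sc c a + sc e x" by (simp add: algebra_simps)
    then show ?thesis by blast
  qed
  have ne: "a \<noteq> - x"
  proof
    assume "a = - x"
    then have "br x a = 0" by (simp add: neg2 alt)
    then show False using hxa ha by simp
  qed
  have notin: "a \<notin> V.span {- x}"
  proof
    assume "a \<in> V.span {- x}"
    then obtain k where "a = sc k (- x)" unfolding V.span_singleton by blast
    then have "br x a = 0" by (simp add: sc2 neg2 alt)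
    then show False using hxa ha by simp
  qed
  have ind: "\<not> V.dependent {a, - x}"
    using ne notin hx0 by (simp add: V.independent_insert)
  have sp: "V.span {a, - x} = UNIV"
  proof (intro set_eqI iffI)
    fix v
    obtain c e where "v = sc c a + sc e x" using all by blast
    then have "v = sc c a + sc (- e) (- x)" by simp
    moreover have "sc c a + sc (- e) (- x) \<in> V.span {a, - x}"
      by (intro V.span_add V.span_scale V.span_base) auto
    ultimately show "v \<in> V.span {a, - x}" by simp
  qed simp
  have "br a (- x) = a" using hax by (simp add: neg2)
  then show ?thesis using ne ind sp by blast
qed

end

theorem corollary2p7:
  fixes sc :: "'k::field \<Rightarrow> 'v::ab_group_add \<Rightarrow> 'v"
    and br :: "'v \<Rightarrow> 'v \<Rightarrow> 'v"
  assumes char: "(2::'k) \<noteq> 0"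
    and lie: "lie_algebra sc br"
    and fin: "finite_dim sc"
    and pure: "pure_lie sc br"
    and nonnil: "\<not> nilpotent_lie sc br"
    and solv: "solvable_lie sc br"
    and br1: "breadth sc br = 1"
  shows "\<exists>x y. x \<noteq> y \<and> \<not> module.dependent sc {x, y} \<and> module.span sc {x, y} = UNIV
               \<and> br x y = x"
proof (cases "\<exists>x0 y0. br x0 y0 \<noteq> 0 \<and> br x0 (br x0 y0) \<noteq> 0")
  case True
  then obtain x0 y0 where "br x0 y0 \<noteq> 0" "br x0 (br x0 y0) \<noteq> 0" by blast
  then show ?thesis using caseA[OF lie fin br1 pure] by blast
next
  case False
  then have "br x (br x y) = 0" for x y
    using zero2[OF lie] by metis
  then have "nilpotent_lie sc br" using caseB[OF lie fin br1] by blast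
  then show ?thesis using nonnil by blast
qed

end
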